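(* For every integer $m\ge2$, $\mathrm{disc}(4m+2,4)=2$.
   Context: For positive integers $n>k$, let $S_n$ be the set of permutations $\pi=(\pi_1,\dots,\pi_n)$ of $1,\dots,n$, with cyclic indexing $\pi_{n+i}=\pi_i$, and $s_i=\sum_{j=0}^{k-1}\pi_{i+j}$ for $i=1,\dots,n$. Define $\mathrm{disc}(\pi,k)=\max_{1\le i\le n}|s_i-\frac{k(n+1)}{2}|$ and $\mathrm{disc}(n,k)=\min_{\pi\in S_n}\mathrm{disc}(\pi,k)$. *)

theory Defs
  imports Complex_Main
begin

text \<open>Permutations of 1..n, represented as lists pi = [pi_1,...,pi_n]
  (0-based list indices: pi_(i+1) = pi ! i).\<close>
definition perms :: "nat \<Rightarrow> nat list set" where
  "perms n = {xs. distinct xs \<and> set xs = {1..n}}"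

text \<open>Cyclic window sum s_(i+1) = sum_(j<k) pi_(i+1+j), indices mod n.\<close>
definition wsum :: "nat list \<Rightarrow> nat \<Rightarrow> nat \<Rightarrow> nat" where
  "wsum xs k i = (\<Sum>j<k. xs ! ((i + j) mod length xs))"

definition disc_perm :: "nat list \<Rightarrow> nat \<Rightarrow> real" where
  "disc_perm xs k = Max ((\<lambda>i. \<bar>real (wsum xs k i) - real k * (real (length xs) + 1) / 2\<bar>) ` {0..<length xs})"

definition disc :: "nat \<Rightarrow> nat \<Rightarrow> real" where
  "disc n k = Min ((\<lambda>xs. disc_perm xs k) ` perms n)"

end

theory Submission imports Defs begin
lemma zz_a:
  fixes a :: "nat \<Rightarrow> int" and m L :: nat
  assumes L: "L = 2*m+1" and m: "m \<ge> 1"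
  and per: "\<forall>t. a (t + L) = a t"
  and inj: "\<forall>x<L. \<forall>y<L. a x = a y \<longrightarrow> x = y"
  and a0: "a 0 = 1" and pos: "\<forall>t. a t \<ge> 1"
  and st: "\<forall>t. \<bar>a (Suc t) - a t\<bar> \<le> 2"
  and a1: "a 1 = 2"
  shows "\<forall>s. 1 \<le> s \<and> s \<le> m \<longrightarrow> a s = 2*int s \<and> a (L-s) = 2*int s+1"
proof -
  have "t \<le> m \<Longrightarrow> (\<forall>s. 1 \<le> s \<and> s \<le> t \<longrightarrow> a s = 2*int s \<and> a (L-s) = 2*int s+1)" for t
  proof (induction t)
    case 0
    then show ?case by simp
  next
    case (Suc t)
    show ?case
    proof (cases "t = 0")
      case True
      have aL: "a L = 1" using per[rule_format, of 0] a0 by simp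
      have "\<bar>a (Suc (L-1)) - a (L-1)\<bar> \<le> 2" using st by blast
      moreover have "Suc (L-1) = L" using L by simp
      ultimately have b: "a (L-1) \<le> 3" using aL by simp
      have "a (L-1) \<noteq> 1" using inj[rule_format, of "L-1" 0] L m a0 by auto
      moreover have "a (L-1) \<noteq> 2" using inj[rule_format, of "L-1" 1] L m a1 by auto
      ultimately have "a (L-1) = 3" using b pos[rule_format, of "L-1"] by linarith
      then show ?thesis using True a1 by (auto simp: le_Suc_eq)
    next
      case False
      have IH: "\<forall>s. 1 \<le> s \<and> s \<le> t \<longrightarrow> a s = 2*int s \<and> a (L-s) = 2*int s+1"
        using Suc by simp
      have key: "a x \<ge> 2*int t+2" if "x < L" "t < x" "x < L - t" for x
      proof (rule ccontr)
        assume "\<not> ?thesis"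
        hence v: "a x \<le> 2*int t + 1" by simp
        obtain v where vv: "a x = int v" using pos[rule_format, of x]
          by (metis zero_le_imp_eq_int order_trans zero_le_one)
        have v1: "v \<ge> 1" using pos[rule_format, of x] vv by simp
        consider "v = 1" | "even v" "v \<ge> 2" | "odd v" "v \<ge> 3"
        proof -
          have "v = 1 \<or> (even v \<and> v \<ge> 2) \<or> (odd v \<and> v \<ge> 3)" using v1 by presburger
          then show ?thesis using that by blast
        qed
        then show False
        proof cases
          case 1
          then show False using inj[rule_format, of x 0] a0 vv that by auto
        next
          case 2
          then obtain s where s: "v = 2*s" by blast
          have "1 \<le> s" "s \<le> t" using 2 s v vv by auto
          hence "a s = a x" using IH vv s by auto
          then show False using inj[rule_format, of x s] that \<open>s \<le> t\<close> L by auto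
        next
          case 3
          then obtain s where s: "v = 2*s+1" by (metis oddE)
          have "1 \<le> s" "s \<le> t" using 3 s v vv by auto
          hence "a (L-s) = a x" using IH vv s by auto
          then show False using inj[rule_format, of x "L-s"] that \<open>s \<le> t\<close> \<open>1 \<le> s\<close> L by auto
        qed
      qed
      have t1: "Suc t \<le> m" using Suc by simp
      have at: "a t = 2*int t" "a (L-t) = 2*int t+1" using IH False by auto
      have g1: "a (Suc t) \<ge> 2*int t+2" using key[of "Suc t"] t1 L by auto
      have "a (Suc t) \<le> 2*int t+2" using st[rule_format, of t] at by simp
      hence A: "a (Suc t) = 2*int (Suc t)" using g1 by simp
      have g2: "a (L - Suc t) \<ge> 2*int t+2" using key[of "L - Suc t"] t1 L by auto
      have "a (L - Suc t) \<noteq> a (Suc t)" using inj[rule_format, of "L - Suc t" "Suc t"] t1 L by auto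
      hence g3: "a (L - Suc t) \<ge> 2*int t+3" using g2 A by auto
      have "Suc (L - Suc t) = L - t" using t1 L by simp
      hence "a (L - Suc t) \<le> 2*int t+3" using st[rule_format, of "L - Suc t"] at by simp
      hence B: "a (L - Suc t) = 2*int (Suc t) + 1" using g3 by simp
      show ?thesis using IH A B by (auto simp: le_Suc_eq)
    qed
  qed
  then show ?thesis by blast
qed

lemma zz_b:
  fixes a :: "nat \<Rightarrow> int" and m L :: nat
  assumes L: "L = 2*m+1" and m: "m \<ge> 1"
  and per: "\<forall>t. a (t + L) = a t"
  and inj: "\<forall>x<L. \<forall>y<L. a x = a y \<longrightarrow> x = y"
  and a0: "a 0 = 1" and pos: "\<forall>t. a t \<ge> 1"
  and st: "\<forall>t. \<bar>a (Suc t) - a t\<bar> \<le> 2"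
  and a1: "a 1 = 3"
  shows "\<forall>s. 1 \<le> s \<and> s \<le> m \<longrightarrow> a s = 2*int s+1 \<and> a (L-s) = 2*int s"
proof -
  have "t \<le> m \<Longrightarrow> (\<forall>s. 1 \<le> s \<and> s \<le> t \<longrightarrow> a s = 2*int s+1 \<and> a (L-s) = 2*int s)" for t
  proof (induction t)
    case 0
    then show ?case by simp
  next
    case (Suc t)
    show ?case
    proof (cases "t = 0")
      case True
      have aL: "a L = 1" using per[rule_format, of 0] a0 by simp
      have "\<bar>a (Suc (L-1)) - a (L-1)\<bar> \<le> 2" using st by blast
      moreover have "Suc (L-1) = L" using L by simp
      ultimately have b: "a (L-1) \<le> 3" using aL by simp
      have "a (L-1) \<noteq> 1" using inj[rule_format, of "L-1" 0] L m a0 by auto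
      moreover have "a (L-1) \<noteq> 3" using inj[rule_format, of "L-1" 1] L m a1 by auto
      ultimately have "a (L-1) = 2" using b pos[rule_format, of "L-1"] by linarith
      then show ?thesis using True a1 by (auto simp: le_Suc_eq)
    next
      case False
      have IH: "\<forall>s. 1 \<le> s \<and> s \<le> t \<longrightarrow> a s = 2*int s+1 \<and> a (L-s) = 2*int s"
        using Suc by simp
      have key: "a x \<ge> 2*int t+2" if "x < L" "t < x" "x < L - t" for x
      proof (rule ccontr)
        assume "\<not> ?thesis"
        hence v: "a x \<le> 2*int t + 1" by simp
        obtain v where vv: "a x = int v" using pos[rule_format, of x]
          by (metis zero_le_imp_eq_int order_trans zero_le_one)
        have v1: "v \<ge> 1" using pos[rule_format, of x] vv by simp
        consider "v = 1" | "even v" "v \<ge> 2" | "odd v" "v \<ge> 3"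
        proof -
          have "v = 1 \<or> (even v \<and> v \<ge> 2) \<or> (odd v \<and> v \<ge> 3)" using v1 by presburger
          then show ?thesis using that by blast
        qed
        then show False
        proof cases
          case 1
          then show False using inj[rule_format, of x 0] a0 vv that by auto
        next
          case 2
          then obtain s where s: "v = 2*s" by blast
          have "1 \<le> s" "s \<le> t" using 2 s v vv by auto
          hence "a (L-s) = a x" using IH vv s by auto
          then show False using inj[rule_format, of x "L-s"] that \<open>s \<le> t\<close> \<open>1 \<le> s\<close> L by auto
        next
          case 3
          then obtain s where s: "v = 2*s+1" by (metis oddE)
          have "1 \<le> s" "s \<le> t" using 3 s v vv by auto
          hence "a s = a x" using IH vv s by auto
          then show False using inj[rule_format, of x s] that \<open>s \<le> t\<close> L by auto
        qed
      qed
      have t1: "Suc t \<le> m" using Suc by simp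
      have at: "a t = 2*int t+1" "a (L-t) = 2*int t" using IH False by auto
      have g2: "a (L - Suc t) \<ge> 2*int t+2" using key[of "L - Suc t"] t1 L by auto
      have "Suc (L - Suc t) = L - t" using t1 L by simp
      hence "a (L - Suc t) \<le> 2*int t+2" using st[rule_format, of "L - Suc t"] at by simp
      hence B: "a (L - Suc t) = 2*int (Suc t)" using g2 by simp
      have g1: "a (Suc t) \<ge> 2*int t+2" using key[of "Suc t"] t1 L by auto
      have "a (L - Suc t) \<noteq> a (Suc t)" using inj[rule_format, of "L - Suc t" "Suc t"] t1 L by auto
      hence g3: "a (Suc t) \<ge> 2*int t+3" using g1 B by auto
      have "a (Suc t) \<le> 2*int t+3" using st[rule_format, of t] at by simp
      hence A: "a (Suc t) = 2*int (Suc t)+1" using g3 by simp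
      show ?thesis using IH A B by (auto simp: le_Suc_eq)
    qed
  qed
  then show ?thesis by blast
qed

lemma mod4_inj:
  fixes n L m p x y :: nat
  assumes "L = 2*m+1" "n = 2*L" "x < L" "y < L" "(p+4*x) mod n = (p+4*y) mod n"
  shows "x = y"
proof (rule ccontr)
  assume ne: "x \<noteq> y"
  { fix x y :: nat assume xy: "x < y" "y < L" "(p+4*x) mod n = (p+4*y) mod n"
    have "n dvd (p+4*y) - (p+4*x)" using xy(3) mod_eq_dvd_iff_nat[of "p+4*x" "p+4*y" n] xy(1) by simp
    hence "2*L dvd 2*(2*(y-x))" using assms(2) by (simp add: algebra_simps diff_mult_distrib2)
    hence d: "L dvd 2*(y-x)" by simp
    have "coprime L 2" using assms(1) by simp
    hence "L dvd (y-x)" using d by (simp add: coprime_dvd_mult_right_iff)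
    moreover have "0 < y - x" "y - x < L" using xy by auto
    ultimately have False by (simp add: nat_dvd_not_less) }
  note * = this
  show False using ne assms *[of x y] *[of y x] by (metis linorder_neqE_nat)
qed

lemma lower:
  fixes m :: nat
  assumes m: "m \<ge> 2" and xs: "xs \<in> perms (4*m+2)"
  shows "disc_perm xs 4 \<ge> 2"
proof (rule ccontr)
  define n where "n = 4*m+2"
  define L where "L = 2*m+1"
  have nL: "n = 2*L" using n_def L_def by simp
  have dx: "distinct xs" and sx: "set xs = {1..n}" using xs n_def by (auto simp: perms_def)
  have len: "length xs = n" using distinct_card[OF dx] sx by simp
  assume "\<not> 2 \<le> disc_perm xs 4"
  hence lt: "disc_perm xs 4 < 2" by simp
  have fin: "finite ((\<lambda>i. \<bar>real (wsum xs 4 i) - real 4 * (real (length xs) + 1) / 2\<bar>) ` {0..<length xs})" by simp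
  have b: "\<bar>real (wsum xs 4 i) - real 4 * (real n + 1) / 2\<bar> < 2" if "i < n" for i
  proof -
    have "\<bar>real (wsum xs 4 i) - real 4 * (real (length xs) + 1) / 2\<bar> \<le> disc_perm xs 4"
      unfolding disc_perm_def using that len by (intro Max_ge[OF fin]) auto
    then show ?thesis using lt len by simp
  qed
  define P where "P i = int (xs ! (i mod n))" for i
  have npos: "n > 0" using n_def by simp
  have Pmod: "P (i mod n) = P i" for i unfolding P_def by simp
  have ws: "int (wsum xs 4 i) = P i + P (i+1) + P (i+2) + P (i+3)" for i
    unfolding wsum_def P_def len by (simp add: eval_nat_numeral)
  have wsm: "wsum xs 4 (i mod n) = wsum xs 4 i" for i
    unfolding wsum_def len by (simp add: mod_add_left_eq)
  have S: "8*int m + 5 \<le> P i + P (i+1) + P (i+2) + P (i+3) \<and> P i + P (i+1) + P (i+2) + P (i+3) \<le> 8*int m + 7" for i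
  proof -
    have "\<bar>real (wsum xs 4 (i mod n)) - real 4 * (real n + 1) / 2\<bar> < 2" using b npos by simp
    hence h: "\<bar>real (wsum xs 4 i) - real 4 * (real n + 1) / 2\<bar> < 2" by (simp only: wsm)
    have eq: "real 4 * (real n + 1) / 2 = 8 * real m + 6" using n_def by simp
    have "\<bar>real (wsum xs 4 i) - (8 * real m + 6)\<bar> < 2" using h unfolding eq .
    hence "\<bar>real_of_int (int (wsum xs 4 i)) - real_of_int (8 * int m + 6)\<bar> < 2" by simp
    hence "\<bar>int (wsum xs 4 i) - (8 * int m + 6)\<bar> < 2"
      by (metis of_int_abs of_int_diff of_int_less_iff of_int_numeral)
    then show ?thesis using ws[of i] by linarith
  qed
  have Pinj: "P i = P j \<Longrightarrow> i mod n = j mod n" for i j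
    unfolding P_def using dx len npos by (simp add: nth_eq_iff_index_eq)
  have Ppos: "P i \<ge> 1" for i
  proof -
    have "xs ! (i mod n) \<in> set xs" using len npos by simp
    then show ?thesis unfolding P_def using sx by auto
  qed
  have step: "\<bar>P (i+4) - P i\<bar> \<le> 2" for i
  proof -
    have e: "i+1+1 = i+2" "i+1+2 = i+3" "i+1+3 = i+4" by simp_all
    show ?thesis using S[of i] S[of "i+1", unfolded e] by linarith
  qed
  have "1 \<in> set xs" using sx n_def by simp
  then obtain p where p: "p < n" "xs ! p = 1" using len by (metis in_set_conv_nth)
  have Pn: "P (x + k*n) = P x" for x k using Pmod[of "x + k*n"] Pmod[of x] by simp
  define a where "a t = P (p + 4*t)" for t
  have per: "\<forall>t. a (t + L) = a t"
  proof
    fix t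
    have "p + 4*(t+L) = (p + 4*t) + 2*n" using nL by simp
    then show "a (t + L) = a t" unfolding a_def by (simp only: Pn)
  qed
  have inj: "\<forall>x<L. \<forall>y<L. a x = a y \<longrightarrow> x = y"
  proof (intro allI impI)
    fix x y assume "x < L" "y < L" "a x = a y"
    then show "x = y" using Pinj[of "p+4*x" "p+4*y"] mod4_inj[OF L_def nL, of x y p] unfolding a_def by simp
  qed
  have a0: "a 0 = 1" unfolding a_def P_def using p by simp
  have pos: "\<forall>t. a t \<ge> 1" unfolding a_def using Ppos by simp
  have st: "\<forall>t. \<bar>a (Suc t) - a t\<bar> \<le> 2"
  proof
    fix t
    have "p + 4 * Suc t = (p + 4*t) + 4" by simp
    then show "\<bar>a (Suc t) - a t\<bar> \<le> 2" unfolding a_def by (simp only: step)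
  qed
  have m1: "m \<ge> 1" using m by simp
  have "a 1 \<le> 3" using st[rule_format, of 0] a0 by simp
  moreover have "a 1 \<noteq> 1" using inj[rule_format, of 1 0] a0 L_def m by auto
  ultimately have a1: "a 1 = 2 \<or> a 1 = 3" using pos[rule_format, of 1] by linarith
  have e2: "P (p+2) = a (L - m)"
  proof -
    have "p + 4*(L-m) = (p+2) + 1*n" using L_def n_def by simp
    then show ?thesis unfolding a_def by (simp only: Pn)
  qed
  have e6: "P (p+6) = a (L - (m-1))"
  proof -
    have "p + 4*(L-(m-1)) = (p+6) + 1*n" using L_def n_def m by simp
    then show ?thesis unfolding a_def by (simp only: Pn)
  qed
  have e4: "P (p+4) = a 1" unfolding a_def by simp
  have e8: "P (p+8) = a 2" unfolding a_def by simp
  have vals: "P (p+2) + P (p+4) = 2*int m + 3 \<and> P (p+4) + P (p+6) = 2*int m + 1 \<and> P (p+6) + P (p+8) = 2*int m + 3"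
    using a1
  proof
    assume "a 1 = 2"
    from zz_a[OF L_def m1 per inj a0 pos st this] have Z:
      "\<forall>s. 1 \<le> s \<and> s \<le> m \<longrightarrow> a s = 2*int s \<and> a (L-s) = 2*int s+1" .
    have z2: "a 2 = 4" using Z[rule_format, of 2] m by simp
    have zm: "a (L-m) = 2*int m + 1" using Z[rule_format, of m] m by simp
    have "a (L-(m-1)) = 2*int (m-1) + 1" using Z[rule_format, of "m-1"] m by simp
    moreover have "int (m-1) = int m - 1" using m by simp
    ultimately have zm1: "a (L-(m-1)) = 2*int m - 1" by simp
    note \<open>a 1 = 2\<close> z2 zm zm1
    then show ?thesis using e2 e4 e6 e8 by simp
  next
    assume "a 1 = 3"
    from zz_b[OF L_def m1 per inj a0 pos st this] have Z:
      "\<forall>s. 1 \<le> s \<and> s \<le> m \<longrightarrow> a s = 2*int s+1 \<and> a (L-s) = 2*int s" .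
    have z2: "a 2 = 5" using Z[rule_format, of 2] m by simp
    have zm: "a (L-m) = 2*int m" using Z[rule_format, of m] m by simp
    have "a (L-(m-1)) = 2*int (m-1)" using Z[rule_format, of "m-1"] m by simp
    moreover have "int (m-1) = int m - 1" using m by simp
    ultimately have zm1: "a (L-(m-1)) = 2*int m - 2" by simp
    note \<open>a 1 = 3\<close> z2 zm zm1
    then show ?thesis using e2 e4 e6 e8 by simp
  qed
  have "P (p+3) = P (p+7)"
  proof -
    have e: "p+2+1 = p+3" "p+2+2 = p+4" "p+2+3 = p+5" "p+3+1 = p+4" "p+3+2 = p+5" "p+3+3 = p+6"
       "p+4+1 = p+5" "p+4+2 = p+6" "p+4+3 = p+7" "p+5+1 = p+6" "p+5+2 = p+7" "p+5+3 = p+8" by simp_all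
    show ?thesis using vals S[of "p+2", unfolded e] S[of "p+3", unfolded e] S[of "p+4", unfolded e] S[of "p+5", unfolded e]
      by linarith
  qed
  hence "(p+3) mod n = (p+7) mod n" by (rule Pinj)
  hence "n dvd 4" using mod_eq_dvd_iff_nat[of "p+3" "p+7" n] by simp
  hence "n \<le> 4" by (simp add: dvd_imp_le)
  then show False using n_def m by simp
qed
definition zz :: "nat \<Rightarrow> nat \<Rightarrow> nat" where
  "zz m u = (if u = 0 then 1 else if even u then u else 2*m+2-u)"

definition cv :: "nat \<Rightarrow> nat \<Rightarrow> nat" where
  "cv m i = (if even i then zz m ((i div 2) mod (2*m+1)) else 4*m+3 - zz m ((i div 2) mod (2*m+1)))"

definition xs0 :: "nat \<Rightarrow> nat list" where
  "xs0 m = map (cv m) [0..<4*m+2]"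

lemma zz_range: "u \<le> 2*m \<Longrightarrow> 1 \<le> zz m u \<and> zz m u \<le> 2*m+1"
  unfolding zz_def by auto

lemma zz_surj: assumes "1 \<le> v" "v \<le> 2*m+1" shows "\<exists>u\<le>2*m. zz m u = v"
proof -
  have "v = 1 \<or> (even v \<and> v \<ge> 2) \<or> (odd v \<and> v \<ge> 3)" using assms by presburger
  moreover
  { assume "v = 1" hence "zz m 0 = v" by (simp add: zz_def) hence ?thesis by blast }
  moreover
  { assume h: "even v" "v \<ge> 2" hence "zz m v = v" by (simp add: zz_def)
    moreover have "v \<le> 2*m" using assms h by presburger
    ultimately have ?thesis by blast }
  moreover
  { assume h: "odd v" "v \<ge> 3"
    hence "odd (2*m+2-v)" using assms by simp
    hence "zz m (2*m+2-v) = v" using h assms by (simp add: zz_def)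
    hence ?thesis using h by (intro exI[of _ "2*m+2-v"]) auto }
  ultimately show ?thesis by blast
qed

lemma cv_range: "1 \<le> cv m i \<and> cv m i \<le> 4*m+2"
proof -
  have "(i div 2) mod (2*m+1) \<le> 2*m"
    by (metis Suc_eq_plus1 less_Suc_eq_le mod_less_divisor zero_less_Suc)
  then show ?thesis using zz_range[of "(i div 2) mod (2*m+1)" m] unfolding cv_def by auto
qed

lemma set_xs0: "set (xs0 m) = {1..4*m+2}"
proof
  show "set (xs0 m) \<subseteq> {1..4*m+2}" unfolding xs0_def using cv_range by auto
next
  show "{1..4*m+2} \<subseteq> set (xs0 m)"
  proof
    fix v assume v: "v \<in> {1..4*m+2}"
    show "v \<in> set (xs0 m)"
    proof (cases "v \<le> 2*m+1")
      case True
      then obtain u where u: "u \<le> 2*m" "zz m u = v" using zz_surj v by auto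
      have "cv m (2*u) = v" using u unfolding cv_def by simp
      moreover have "2*u < 4*m+2" using u by simp
      ultimately show ?thesis unfolding xs0_def set_map set_upt by (intro image_eqI[of _ _ "2*u"]) auto
    next
      case False
      have "1 \<le> 4*m+3-v" "4*m+3-v \<le> 2*m+1" using v False by auto
      then obtain u where u: "u \<le> 2*m" "zz m u = 4*m+3-v" using zz_surj[of "4*m+3-v" m] by auto
      have "cv m (2*u+1) = v" using u False v unfolding cv_def by simp
      moreover have "2*u+1 < 4*m+2" using u by simp
      ultimately show ?thesis unfolding xs0_def set_map set_upt by (intro image_eqI[of _ _ "2*u+1"]) auto
    qed
  qed
qed

lemma xs0_perm: "xs0 m \<in> perms (4*m+2)"
proof -
  have "card (set (xs0 m)) = length (xs0 m)" using set_xs0[of m] by (simp add: xs0_def)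
  then show ?thesis unfolding perms_def using set_xs0[of m] card_distinct by blast
qed

lemma cv_mod: "cv m (i mod (4*m+2)) = cv m i"
proof -
  define L where "L = 2*m+1"
  have n: "4*m+2 = 2*L" using L_def by simp
  have e: "i mod (2*L) = 2*((i div 2) mod L) + i mod 2" by (simp add: mod_mult2_eq)
  hence "(i mod (2*L)) div 2 = (i div 2) mod L" by simp
  moreover have "even (i mod (2*L)) = even i" by (rule dvd_mod_iff) simp
  ultimately show ?thesis unfolding cv_def n L_def[symmetric] by simp
qed

lemma nth_xs0: "xs0 m ! (i mod (4*m+2)) = cv m i"
proof -
  have "i mod (4*m+2) < length [0..<4*m+2]" by simp
  then show ?thesis unfolding xs0_def using cv_mod[of m i] by (simp del: upt_Suc)
qed

definition Z :: "nat \<Rightarrow> nat \<Rightarrow> int" where "Z m j = int (zz m (j mod (2*m+1)))"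

lemma cv_Z_even: "int (cv m (2*j)) = Z m j" unfolding cv_def Z_def by simp
lemma cv_Z_odd: "int (cv m (2*j+1)) = 4*int m + 3 - Z m j"
proof -
  have "(j mod (2*m+1)) \<le> 2*m"
    by (metis Suc_eq_plus1 less_Suc_eq_le mod_less_divisor zero_less_Suc)
  then have "zz m (j mod (2*m+1)) \<le> 2*m+1" using zz_range by blast
  then show ?thesis unfolding cv_def Z_def by (simp add: of_nat_diff)
qed

lemma Z_step: assumes "m \<ge> 1" shows "\<bar>Z m (j+2) - Z m j\<bar> \<le> 2"
proof -
  define L where "L = 2*m+1"
  define u where "u = j mod L"
  have uL: "u < L" unfolding u_def L_def by simp
  have e: "(j+2) mod L = (u+2) mod L" unfolding u_def by (rule mod_add_left_eq[symmetric])
  have "\<bar>int (zz m ((u+2) mod L)) - int (zz m u)\<bar> \<le> 2"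
  proof -
    consider "u+2 < L" | "u = 2*m-1" | "u = 2*m" using uL L_def assms by linarith
    then show ?thesis
    proof cases
      case 1
      then show ?thesis unfolding zz_def L_def by (auto simp: of_nat_diff)
    next
      case 2
      hence "(u+2) mod L = 0" using L_def assms by simp
      moreover have "odd u" "u \<noteq> 0" using 2 assms by presburger+
      ultimately show ?thesis using 2 assms unfolding zz_def by simp
    next
      case 3
      hence "u+2 = 1 + L" using L_def by simp
      hence "(u+2) mod L = 1 mod L" by (metis mod_add_self2)
      hence "(u+2) mod L = 1" using L_def assms by simp
      moreover have "even u" "u \<noteq> 0" using 3 assms by auto
      ultimately show ?thesis using 3 assms unfolding zz_def by simp
    qed
  qed
  then show ?thesis unfolding Z_def L_def[symmetric] u_def[symmetric] e by simp
qed

lemma sum4: "(\<Sum>j<(4::nat). g j) = g 0 + g 1 + g 2 + (g 3 :: nat)"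
  by (simp add: eval_nat_numeral)

lemma upper:
  assumes m: "m \<ge> 1"
  shows "disc_perm (xs0 m) 4 \<le> 2"
proof -
  define n where "n = 4*m+2"
  have len: "length (xs0 m) = n" unfolding xs0_def n_def by simp
  have ws: "int (wsum (xs0 m) 4 i) = int (cv m i) + int (cv m (i+1)) + int (cv m (i+2)) + int (cv m (i+3))" for i
  proof -
    have "wsum (xs0 m) 4 i = (\<Sum>j<4. cv m (i+j))" unfolding wsum_def len n_def nth_xs0 by simp
    then show ?thesis unfolding sum4 by simp
  qed
  have w: "\<bar>int (wsum (xs0 m) 4 i) - (8*int m + 6)\<bar> \<le> 2" for i
  proof (cases "even i")
    case True
    then obtain j where j: "i = 2*j" by blast
    have "int (cv m i) = Z m j" using j cv_Z_even[of m j] by simp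
    moreover have "int (cv m (i+1)) = 4*int m+3 - Z m j" proof - have e: "i+1 = 2*(j)+1" using j by simp show ?thesis unfolding e by (rule cv_Z_odd) qed
    moreover have "int (cv m (i+2)) = Z m (j+1)" proof - have e: "i+2 = 2*(j+1)" using j by simp show ?thesis unfolding e by (rule cv_Z_even) qed
    moreover have "int (cv m (i+3)) = 4*int m+3 - Z m (j+1)" proof - have e: "i+3 = 2*(j+1)+1" using j by simp show ?thesis unfolding e by (rule cv_Z_odd) qed
    ultimately show ?thesis using ws[of i] by linarith
  next
    case False
    then obtain j where j: "i = 2*j+1" by (metis oddE)
    have "int (cv m i) = 4*int m+3 - Z m j" using j cv_Z_odd[of m j] by simp
    moreover have "int (cv m (i+1)) = Z m (j+1)" proof - have e: "i+1 = 2*(j+1)" using j by simp show ?thesis unfolding e by (rule cv_Z_even) qed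
    moreover have "int (cv m (i+2)) = 4*int m+3 - Z m (j+1)" proof - have e: "i+2 = 2*(j+1)+1" using j by simp show ?thesis unfolding e by (rule cv_Z_odd) qed
    moreover have "int (cv m (i+3)) = Z m (j+2)" proof - have e: "i+3 = 2*(j+2)" using j by simp show ?thesis unfolding e by (rule cv_Z_even) qed
    ultimately show ?thesis using ws[of i] Z_step[OF m, of j] by linarith
  qed
  have "\<bar>real (wsum (xs0 m) 4 i) - real 4 * (real (length (xs0 m)) + 1) / 2\<bar> \<le> 2" for i
  proof -
    have eq: "real 4 * (real (length (xs0 m)) + 1) / 2 = real_of_int (8*int m + 6)" using len n_def by simp
    have "\<bar>real_of_int (int (wsum (xs0 m) 4 i)) - real_of_int (8*int m + 6)\<bar> \<le> 2"
      using w[of i] by (metis of_int_abs of_int_diff of_int_le_iff of_int_numeral)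
    then show ?thesis unfolding eq by simp
  qed
  moreover have "length (xs0 m) > 0" using len n_def by simp
  ultimately show ?thesis unfolding disc_perm_def by (subst Max_le_iff) auto
qed

lemma finite_perms: "finite (perms n)"
proof -
  have "perms n \<subseteq> {xs. set xs \<subseteq> {1..n} \<and> length xs = n}"
    unfolding perms_def using distinct_card by fastforce
  moreover have "finite {xs. set xs \<subseteq> {1..n} \<and> length xs = n}"
    by (rule finite_lists_length_eq) simp
  ultimately show ?thesis by (rule finite_subset)
qed

theorem proposition2p2:
  fixes m :: nat
  assumes "m \<ge> 2"
  shows "disc (4 * m + 2) 4 = 2"
proof -
  have eq: "disc_perm (xs0 m) 4 = 2" using upper[of m] lower[OF assms xs0_perm[of m]] assms by simp
  show ?thesis unfolding disc_def
  proof (rule Min_eqI)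
    show "finite ((\<lambda>xs. disc_perm xs 4) ` perms (4 * m + 2))" using finite_perms by simp
    show "\<And>y. y \<in> (\<lambda>xs. disc_perm xs 4) ` perms (4 * m + 2) \<Longrightarrow> 2 \<le> y" using lower[OF assms] by blast
    show "2 \<in> (\<lambda>xs. disc_perm xs 4) ` perms (4 * m + 2)" using eq xs0_perm[of m] by force
  qed
qed

end
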